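(* Let $d\ge 1$, let $\mathcal{S}$ be a nonempty finite index set, and let $\hat u_m\in\{-1,1\}^d$ for each $m\in\mathcal{S}$. Then for every coordinate $i\in[d]$, the signs of the outputs in coordinate $i$ of the following aggregation rules all coincide: the mean rule $\mathrm{Agg}_{\mathrm{avg}}$, the coordinate-wise $k$-trimmed-mean rule $\mathrm{Agg}_{\mathrm{trimmed},k}$ for any integer $0\le k<|\mathcal{S}|/2$, the coordinate-wise median rule $\mathrm{Agg}_{\mathrm{median}}$, and the coordinate-wise majority vote rule $\mathrm{Agg}_{\mathrm{maj}}$.
   Context: Let $\hat u_{mi}$ denote the $i$-th coordinate of $\hat u_m$, and $\mathrm{sign}:\mathbb{R}\to\{-1,0,1\}$ the usual sign function (with $\mathrm{sign}(0)=0$). The rules are defined as follows. (A.1) Mean: $\mathrm{Agg}_{\mathrm{avg}}(\{\hat u_m\}_{m\in\mathcal{S}})=\frac{1}{|\mathcal{S}|}\sum_{m\in\mathcal{S}}\hat u_m$. (A.2) Coordinate-wise $k$-trimmed mean ($k\in\mathbb{N}$): for each coordinate $i$, sort $\{\hat u_{mi}: m\in\mathcal{S}\}$ in increasing order, remove the top $k$ and bottom $k$ values, and let $\mathcal{R}_i$ be the set of remaining clients; if $\mathcal{R}_i=\emptyset$ the output in coordinate $i$ is $1$ or $-1$ uniformly at random, otherwise it is $\frac{1}{|\mathcal{R}_i|}\sum_{m\in\mathcal{R}_i}\hat u_{mi}$. (A.3) Coordinate-wise median: for each coordinate $i$, sort $\{\hat u_{mi}: m\in\mathcal{S}\}$ increasingly;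 if $|\mathcal{S}|$ is even, output the average of the elements of ranks $|\mathcal{S}|/2$ and $|\mathcal{S}|/2+1$; otherwise output the element of rank $\lceil|\mathcal{S}|/2\rceil$. (A.4) Coordinate-wise majority vote: in coordinate $i$ output $1$ if there are more $1$'s than $-1$'s among $\{\hat u_{mi}:m\in\mathcal{S}\}$, output $-1$ if there are more $-1$'s than $1$'s, and output $0$ otherwise. *)

theory Defs
  imports "HOL-Analysis.Analysis" "HOL-Library.Multiset"
begin

text \<open>Clients are indexed by a finite set S of type 'm; each client vector is
  in real^'n (d = CARD('n) \<ge> 1).\<close>

definition coord_sorted :: "'m set \<Rightarrow> ('m \<Rightarrow> real^'n) \<Rightarrow> 'n \<Rightarrow> real list" where
  "coord_sorted S u i = sorted_list_of_multiset (image_mset (\<lambda>m. u m $ i) (mset_set S))"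

definition agg_avg :: "'m set \<Rightarrow> ('m \<Rightarrow> real^'n) \<Rightarrow> real^'n" where
  "agg_avg S u = (1 / real (card S)) *\<^sub>R (\<Sum>m\<in>S. u m)"

(* (A.2) coordinate-wise k-trimmed mean; coin i \<in> {-1,1} models the random
   output used when no values remain in coordinate i *)
definition agg_trimmed :: "nat \<Rightarrow> ('n \<Rightarrow> real) \<Rightarrow> 'm set \<Rightarrow> ('m \<Rightarrow> real^'n) \<Rightarrow> real^'n" where
  "agg_trimmed k coin S u = (\<chi> i.
     (let xs = coord_sorted S u i;
          R = take (length xs - 2 * k) (drop k xs)
      in if R = [] then coin i else sum_list R / real (length R)))"

definition agg_median :: "'m set \<Rightarrow> ('m \<Rightarrow> real^'n) \<Rightarrow> real^'n" where
  "agg_median S u = (\<chi> i.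
     (let xs = coord_sorted S u i; n = card S
      in if even n then (xs ! (n div 2 - 1) + xs ! (n div 2)) / 2
         else xs ! (n div 2)))"

definition agg_maj :: "'m set \<Rightarrow> ('m \<Rightarrow> real^'n) \<Rightarrow> real^'n" where
  "agg_maj S u = (\<chi> i.
     (let p = card {m\<in>S. u m $ i = 1}; q = card {m\<in>S. u m $ i = -1}
      in if p > q then 1 else if q > p then -1 else 0))"

end

theory Submission imports Defs begin
lemma key:
  fixes p q k :: nat
  assumes "2*k < p+q"
  defines "xs \<equiv> replicate q (-1::real) @ replicate p 1"
  defines "R \<equiv> take (length xs - 2 * k) (drop k xs)"
  shows "R \<noteq> [] \<and> sgn (sum_list R / real (length R)) = sgn (real p - real q)"
proof -
  define a where "a = min (p+q-2*k) (q-k)"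
  define b where "b = min (p+q-2*k-(q-k)) (p-(k-q))"
  have R: "R = replicate a (-1) @ replicate b 1"
    unfolding R_def xs_def a_def b_def by (simp add: take_append drop_append add.commute)
  have ab: "a + b = p+q-2*k" unfolding a_def b_def using assms(1) by linarith
  have s: "sgn (real b - real a) = sgn (real p - real q)"
  proof -
    have "(b > a \<longleftrightarrow> p > q) \<and> (a > b \<longleftrightarrow> q > p)" unfolding a_def b_def using assms(1) by linarith
    then show ?thesis by (auto simp: sgn_if)
  qed
  have len: "length R = a + b" unfolding R by simp
  have "sum_list R = real b - real a" unfolding R by (simp add: sum_list_replicate)
  moreover have "length R > 0" using len ab assms(1) by linarith
  ultimately have "sgn (sum_list R / real (length R)) = sgn (real b - real a)"
    by (simp add: sgn_divide)
  then show ?thesis using \<open>length R > 0\<close> s by auto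
qed

lemma keym:
  fixes p q :: nat
  assumes "0 < p+q"
  defines "xs \<equiv> replicate q (-1::real) @ replicate p 1"
  shows "sgn (if even (p+q) then (xs ! ((p+q) div 2 - 1) + xs ! ((p+q) div 2)) / 2
         else xs ! ((p+q) div 2)) = sgn (real p - real q)"
proof (cases "even (p+q)")
  case True
  then obtain h where h: "p+q = 2*h" by blast
  with assms have "h > 0" by simp
  show ?thesis using True h \<open>h>0\<close> unfolding xs_def
    by (cases "q < h"; cases "q = h"; simp add: nth_append sgn_if)
next
  case False
  then obtain h where h: "p+q = 2*h+1" by (metis oddE)
  show ?thesis using False h unfolding xs_def
    by (cases "q \<le> h"; simp add: nth_append sgn_if)
qed

lemma img_const: "finite A \<Longrightarrow> \<forall>m\<in>A. f m = c \<Longrightarrow> image_mset f (mset_set A) = replicate_mset (card A) c"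
proof -
  assume "finite A" "\<forall>m\<in>A. f m = c"
  then have "image_mset f (mset_set A) = image_mset (\<lambda>_. c) (mset_set A)"
    by (intro image_mset_cong) (simp add: \<open>finite A\<close>)
  then show ?thesis by (simp add: image_mset_const_eq)
qed

lemma coord_info:
  fixes S :: "'m set" and u :: "'m \<Rightarrow> real^'n" and i :: 'n
  assumes fin: "finite S" and vals: "\<forall>m\<in>S. \<forall>i. u m $ i \<in> {-1, 1}"
  defines "p \<equiv> card {m\<in>S. u m $ i = 1}" and "q \<equiv> card {m\<in>S. u m $ i = -1}"
  shows "coord_sorted S u i = replicate q (-1) @ replicate p 1"
    and "p + q = card S"
    and "(\<Sum>m\<in>S. u m $ i) = real p - real q"
proof -
  let ?A = "{m\<in>S. u m $ i = -1}" and ?B = "{m\<in>S. u m $ i = 1}"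
  have SAB: "S = ?A \<union> ?B" using vals by auto
  have disj: "?A \<inter> ?B = {}" by auto
  have fA: "finite ?A" and fB: "finite ?B" using fin by auto
  show "p + q = card S" unfolding p_def q_def using card_Un_disjoint[OF fA fB disj] SAB by simp
  have "(\<Sum>m\<in>S. u m $ i) = (\<Sum>m\<in>?A. u m $ i) + (\<Sum>m\<in>?B. u m $ i)"
    using sum.union_disjoint[OF fA fB disj, of "\<lambda>m. u m $ i"] SAB by metis
  also have "\<dots> = real p - real q" unfolding p_def q_def by simp
  finally show "(\<Sum>m\<in>S. u m $ i) = real p - real q" .
  have "mset_set S = mset_set ?A + mset_set ?B"
    using mset_set_Union[OF fA fB disj] SAB by simp
  then have M: "image_mset (\<lambda>m. u m $ i) (mset_set S) = replicate_mset q (-1) + replicate_mset p 1"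
    unfolding p_def q_def using img_const[OF fA, of "\<lambda>m. u m $ i" "-1"] img_const[OF fB, of "\<lambda>m. u m $ i" 1]
    by simp
  have "mset (replicate q (-1::real) @ replicate p 1) = replicate_mset q (-1) + replicate_mset p 1"
    by simp
  moreover have "sorted (replicate q (-1::real) @ replicate p 1)"
    by (auto simp: sorted_append)
  ultimately show "coord_sorted S u i = replicate q (-1) @ replicate p 1"
    unfolding coord_sorted_def M
    by (metis sorted_list_of_multiset_mset sorted_sort_id)
qed

theorem theorem1:
  fixes S :: "'m set" and u :: "'m \<Rightarrow> real^'n" and k :: nat and coin :: "'n \<Rightarrow> real"
  assumes "finite S" and "S \<noteq> {}"
    and "\<forall>m\<in>S. \<forall>i. u m $ i \<in> {-1, 1}"
    and "2 * k < card S"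
    and "\<forall>i. coin i \<in> {-1, 1}"
  shows "\<forall>i. sgn (agg_avg S u $ i) = sgn (agg_trimmed k coin S u $ i)
           \<and> sgn (agg_trimmed k coin S u $ i) = sgn (agg_median S u $ i)
           \<and> sgn (agg_median S u $ i) = sgn (agg_maj S u $ i)"
proof
  fix i
  define p where "p = card {m\<in>S. u m $ i = 1}"
  define q where "q = card {m\<in>S. u m $ i = -1}"
  note ci = coord_info[OF assms(1,3), of i, folded p_def q_def]
  have cpos: "card S > 0" using assms(1,2) by (simp add: card_gt_0_iff)
  have avg: "sgn (agg_avg S u $ i) = sgn (real p - real q)"
    using cpos by (simp add: agg_avg_def sum_component ci(3) sgn_mult)
  have tr: "sgn (agg_trimmed k coin S u $ i) = sgn (real p - real q)"
  proof -
    have "2*k < p+q" using assms(4) ci(2) by simp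
    note kk = key[OF this]
    have e: "agg_trimmed k coin S u $ i = (let xs = replicate q (-1) @ replicate p 1;
          R = take (length xs - 2 * k) (drop k xs)
      in if R = [] then coin i else sum_list R / real (length R))"
      unfolding agg_trimmed_def ci(1)[symmetric] by simp
    show ?thesis unfolding e Let_def by (subst if_not_P[OF conjunct1[OF kk]]) (rule conjunct2[OF kk])
  qed
  have med: "sgn (agg_median S u $ i) = sgn (real p - real q)"
  proof -
    have "0 < p+q" using cpos ci(2) by simp
    note kk = keym[OF this]
    have e: "agg_median S u $ i = (let xs = replicate q (-1) @ replicate p 1; n = p + q
      in if even n then (xs ! (n div 2 - 1) + xs ! (n div 2)) / 2
         else xs ! (n div 2))"
      unfolding agg_median_def ci(1)[symmetric] ci(2) by simp
    show ?thesis using kk unfolding e Let_def by assumption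
  qed
  have maj: "sgn (agg_maj S u $ i) = sgn (real p - real q)"
    by (simp add: agg_maj_def Let_def p_def[symmetric] q_def[symmetric] sgn_if)
  show "sgn (agg_avg S u $ i) = sgn (agg_trimmed k coin S u $ i)
           \<and> sgn (agg_trimmed k coin S u $ i) = sgn (agg_median S u $ i)
           \<and> sgn (agg_median S u $ i) = sgn (agg_maj S u $ i)"
    using avg tr med maj by simp
qed
end
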